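(* Let $G=\langle\omega,\xi\mid \xi^2=1,\ \omega^2=\xi\omega^5\xi\rangle$ and let $$D_{14}\times\mathbb{Z}/3=\langle a,b,\xi\mid \xi^2=1,\ a^3=1,\ b^7=1,\ \xi b\xi=b^6,\ [a,b]=[a,\xi]=1\rangle,$$ where $[x,y]=xyx^{-1}y^{-1}$. Then the assignment $\xi\mapsto\xi$, $\omega\mapsto ab$ defines an isomorphism $G\cong D_{14}\times\mathbb{Z}/3$. *)

theory Defs
  imports "HOL-Algebra.Group"
begin

text \<open>A word over generators of type 'g is a list of letters (g, e), where
  e = False means the generator g and e = True means its inverse.\<close>

type_synonym 'g word = "('g \<times> bool) list"

definition gen :: "'g \<Rightarrow> 'g word" where
  "gen g = [(g, False)]"

definition inv_word :: "'g word \<Rightarrow> 'g word" where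
  "inv_word w = rev (map (\<lambda>(g, e). (g, \<not> e)) w)"

definition pow_word :: "'g word \<Rightarrow> nat \<Rightarrow> 'g word" where
  "pow_word w n = concat (replicate n w)"

definition comm_word :: "'g word \<Rightarrow> 'g word \<Rightarrow> 'g word" where
  "comm_word x y = x @ y @ inv_word x @ inv_word y"

text \<open>A relation u = v is encoded by the relator u v^-1.\<close>
definition rel_word :: "'g word \<Rightarrow> 'g word \<Rightarrow> 'g word" where
  "rel_word u v = u @ inv_word v"

inductive_set pres_rel :: "'g word set \<Rightarrow> ('g word \<times> 'g word) set"
  for R :: "'g word set" where
  refl: "(w, w) \<in> pres_rel R"
| sym: "(u, v) \<in> pres_rel R \<Longrightarrow> (v, u) \<in> pres_rel R"
| trans: "(u, v) \<in> pres_rel R \<Longrightarrow> (v, w) \<in> pres_rel R \<Longrightarrow> (u, w) \<in> pres_rel R"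
| cancel: "(u @ [(g, e), (g, \<not> e)] @ v, u @ v) \<in> pres_rel R"
| relator: "r \<in> R \<Longrightarrow> (u @ r @ v, u @ v) \<in> pres_rel R"

definition presented_group :: "'g word set \<Rightarrow> 'g word set monoid" where
  "presented_group R =
     \<lparr> carrier = UNIV // pres_rel R,
       mult = (\<lambda>X Y. \<Union>x\<in>X. \<Union>y\<in>Y. pres_rel R `` {x @ y}),
       one = pres_rel R `` {[]} \<rparr>"

definition word_class :: "'g word set \<Rightarrow> 'g word \<Rightarrow> 'g word set" where
  "word_class R w = pres_rel R `` {w}"

datatype genG = Om | Xi
datatype genD = A | B | X

definition relG :: "genG word set" where
  "relG = { pow_word (gen Xi) 2,
            rel_word (pow_word (gen Om) 2) (gen Xi @ pow_word (gen Om) 5 @ gen Xi) }"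

definition relD :: "genD word set" where
  "relD = { pow_word (gen X) 2,
            pow_word (gen A) 3,
            pow_word (gen B) 7,
            rel_word (gen X @ gen B @ gen X) (pow_word (gen B) 6),
            comm_word (gen A) (gen B),
            comm_word (gen A) (gen X) }"

abbreviation G_grp :: "genG word set monoid" where
  "G_grp \<equiv> presented_group relG"

abbreviation D_grp :: "genD word set monoid" where
  "D_grp \<equiv> presented_group relD"

end

theory Submission
  imports Defs
begin

lemma pres_cong: "(u, v) \<in> pres_rel R \<Longrightarrow> (p @ u @ q, p @ v @ q) \<in> pres_rel R"
proof (induction rule: pres_rel.induct)
  case (refl w) then show ?case by (rule pres_rel.refl)
next
  case (sym u v) then show ?case using pres_rel.sym by blast
next
  case (trans u v w) then show ?case using pres_rel.trans by blast
next
  case (cancel u g e v)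
  then show ?case using pres_rel.cancel[of "p @ u" g e "v @ q" R] by simp
next
  case (relator r u v)
  then show ?case using pres_rel.relator[of r R "p @ u" "v @ q"] by simp
qed

lemma pres_cong2: "(u, u') \<in> pres_rel R \<Longrightarrow> (v, v') \<in> pres_rel R \<Longrightarrow> (u @ v, u' @ v') \<in> pres_rel R"
  using pres_cong[of u u' R "[]" v] pres_cong[of v v' R u' "[]"]
  by (auto intro: pres_rel.trans)

lemma equiv_pres: "equiv UNIV (pres_rel R)"
  unfolding equiv_def refl_on_def sym_def trans_def
  by (auto intro: pres_rel.refl pres_rel.sym pres_rel.trans)

lemma inv_word_Cons: "inv_word ((g, e) # w) = inv_word w @ [(g, \<not> e)]"
  by (simp add: inv_word_def)

lemma inv_word_inv_word: "inv_word (inv_word w) = w"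
  by (induction w) (auto simp: inv_word_def rev_map)

lemma inv_word_append: "inv_word (u @ v) = inv_word v @ inv_word u"
  by (simp add: inv_word_def)

lemma pres_inv_r: "(w @ inv_word w, []) \<in> pres_rel R"
proof (induction w)
  case Nil then show ?case by (simp add: inv_word_def pres_rel.refl)
next
  case (Cons a w)
  obtain g e where a: "a = (g, e)" by (cases a)
  have "(((g, e) # w @ inv_word w) @ [(g, \<not> e)], [(g,e)] @ [] @ [(g, \<not> e)]) \<in> pres_rel R"
    using pres_cong[OF Cons, of "[(g,e)]" "[(g, \<not> e)]"] by simp
  moreover have "([(g,e)] @ [] @ [(g, \<not> e)], []) \<in> pres_rel R"
    using pres_rel.cancel[of "[]" g e "[]" R] by simp
  ultimately show ?case unfolding a inv_word_Cons by (auto intro: pres_rel.trans)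
qed

lemma pres_inv_l: "(inv_word w @ w, []) \<in> pres_rel R"
  using pres_inv_r[of "inv_word w" R] by (simp add: inv_word_inv_word)

lemma wc_eq: "(u, v) \<in> pres_rel R \<Longrightarrow> word_class R u = word_class R v"
  unfolding word_class_def using equiv_pres by (rule equiv_class_eq)

lemma wc_mem: "w \<in> word_class R w"
  unfolding word_class_def by (simp add: pres_rel.refl)

lemma wc_mem_iff: "v \<in> word_class R w \<longleftrightarrow> (w, v) \<in> pres_rel R"
  unfolding word_class_def by simp

lemma carrier_PG: "carrier (presented_group R) = range (word_class R)"
  unfolding presented_group_def word_class_def quotient_def by auto

lemma mult_PG: "word_class R u \<otimes>\<^bsub>presented_group R\<^esub> word_class R v = word_class R (u @ v)"
proof -
  have "\<And>x y. x \<in> word_class R u \<Longrightarrow> y \<in> word_class R v \<Longrightarrow> pres_rel R `` {x @ y} = word_class R (u @ v)"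
    unfolding wc_mem_iff word_class_def[symmetric]
    by (rule wc_eq, rule pres_rel.sym, rule pres_cong2)
  then show ?thesis unfolding presented_group_def apply simp
    using wc_mem by blast
qed

lemma one_PG: "\<one>\<^bsub>presented_group R\<^esub> = word_class R []"
  unfolding presented_group_def word_class_def by simp

lemma group_PG: "group (presented_group R)"
proof (rule groupI)
  fix x y assume "x \<in> carrier (presented_group R)" "y \<in> carrier (presented_group R)"
  then show "x \<otimes>\<^bsub>presented_group R\<^esub> y \<in> carrier (presented_group R)"
    unfolding carrier_PG by (auto simp: mult_PG)
next
  show "\<one>\<^bsub>presented_group R\<^esub> \<in> carrier (presented_group R)"
    unfolding carrier_PG one_PG by auto
next
  fix x y z assume "x \<in> carrier (presented_group R)" "y \<in> carrier (presented_group R)"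
    "z \<in> carrier (presented_group R)"
  then show "x \<otimes>\<^bsub>presented_group R\<^esub> y \<otimes>\<^bsub>presented_group R\<^esub> z =
       x \<otimes>\<^bsub>presented_group R\<^esub> (y \<otimes>\<^bsub>presented_group R\<^esub> z)"
    unfolding carrier_PG by (auto simp: mult_PG)
next
  fix x assume "x \<in> carrier (presented_group R)"
  then show "\<one>\<^bsub>presented_group R\<^esub> \<otimes>\<^bsub>presented_group R\<^esub> x = x"
    unfolding carrier_PG by (auto simp: mult_PG one_PG)
next
  fix x assume "x \<in> carrier (presented_group R)"
  then obtain w where x: "x = word_class R w" unfolding carrier_PG by auto
  show "\<exists>y\<in>carrier (presented_group R). y \<otimes>\<^bsub>presented_group R\<^esub> x = \<one>\<^bsub>presented_group R\<^esub>"
    apply (rule bexI[of _ "word_class R (inv_word w)"])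
    unfolding x mult_PG one_PG carrier_PG using wc_eq[OF pres_inv_l] by auto
qed

lemma wc_rel: "r \<in> R \<Longrightarrow> word_class R r = word_class R []"
  using wc_eq[OF pres_rel.relator[of r R "[]" "[]"]] by simp

definition ev :: "('h, 'm) monoid_scheme \<Rightarrow> ('g \<Rightarrow> 'h) \<Rightarrow> 'g word \<Rightarrow> 'h" where
  "ev H f w = foldr (\<lambda>(g, e) acc. (if e then inv\<^bsub>H\<^esub> (f g) else f g) \<otimes>\<^bsub>H\<^esub> acc) w \<one>\<^bsub>H\<^esub>"

lemma ev_Nil [simp]: "ev H f [] = \<one>\<^bsub>H\<^esub>" by (simp add: ev_def)
lemma ev_Cons: "ev H f ((g, e) # w) = (if e then inv\<^bsub>H\<^esub> (f g) else f g) \<otimes>\<^bsub>H\<^esub> ev H f w"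
  by (simp add: ev_def)

context group
begin

lemma ev_closed: "range f \<subseteq> carrier G \<Longrightarrow> ev G f w \<in> carrier G"
proof (induction w)
  case (Cons a w) then show ?case by (cases a) (auto simp: ev_Cons)
qed simp

lemma ev_append: "range f \<subseteq> carrier G \<Longrightarrow> ev G f (u @ v) = ev G f u \<otimes> ev G f v"
proof (induction u)
  case (Cons a u)
  have [simp]: "\<And>g. f g \<in> carrier G" using Cons by auto
  show ?case using Cons by (cases a) (auto simp: ev_Cons ev_closed m_assoc)
qed (simp add: ev_closed)

lemma ev_gen: "range f \<subseteq> carrier G \<Longrightarrow> ev G f (gen g) = f g"
  by (subgoal_tac "f g \<in> carrier G") (auto simp: gen_def ev_Cons)

lemma ev_inv_word: "range f \<subseteq> carrier G \<Longrightarrow> ev G f (inv_word w) = inv (ev G f w)"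
proof (induction w)
  case Nil then show ?case by (simp add: inv_word_def)
next
  case (Cons a w)
  obtain g e where a: "a = (g, e)" by (cases a)
  have fg: "f g \<in> carrier G" using Cons by auto
  show ?case unfolding a inv_word_Cons ev_append[OF Cons(2)] ev_Cons
    using Cons fg by (auto simp: inv_mult_group ev_closed)
qed

lemma pow_word_Suc: "pow_word w (Suc n) = pow_word w n @ w"
  by (induction n) (simp_all add: pow_word_def)

lemma ev_pow: "range f \<subseteq> carrier G \<Longrightarrow> ev G f (pow_word w n) = ev G f w [^] n"
proof (induction n)
  case 0 then show ?case by (simp add: pow_word_def)
next
  case (Suc n)
  then show ?case by (simp add: ev_append pow_word_Suc)
qed

lemma ev_resp:
  assumes f: "range f \<subseteq> carrier G" and R: "\<And>r. r \<in> R \<Longrightarrow> ev G f r = \<one>"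
  shows "(u, v) \<in> pres_rel R \<Longrightarrow> ev G f u = ev G f v"
proof (induction rule: pres_rel.induct)
  case (cancel u g e v)
  have fg: "f g \<in> carrier G" using f by auto
  have "ev G f ((g, e) # (g, \<not> e) # v) = ev G f v" using fg ev_closed[OF f]
    by (cases e) (auto simp: ev_Cons m_assoc[symmetric])
  then show ?case using f by (simp add: ev_append[OF f, of u])
next
  case (relator r u v)
  then show ?case using f R by (simp add: ev_append[OF f] ev_closed)
qed auto

lemma ev_hom:
  assumes h: "h \<in> hom G H" and gH: "group H" and f: "range f \<subseteq> carrier G"
  shows "h (ev G f w) = ev H (h \<circ> f) w"
proof -
  interpret gh: group_hom G H h using h gH by (simp add: group_hom_def group_hom_axioms_def group_axioms)
  show ?thesis
  proof (induction w)
    case Nil then show ?case by simp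
  next
    case (Cons a w)
    obtain g e where a: "a = (g, e)" by (cases a)
    have fg: "f g \<in> carrier G" using f by auto
    show ?case unfolding a ev_Cons using Cons fg f ev_closed[OF f] by (auto simp: comp_def)
  qed
qed

end

lemma ev_PG: "ev (presented_group R) (\<lambda>g. word_class R (gen g)) w = word_class R w"
proof (induction w)
  case Nil then show ?case by (simp add: one_PG)
next
  case (Cons a w)
  obtain g e where a: "a = (g, e)" by (cases a)
  interpret group "presented_group R" by (rule group_PG)
  have 1: "word_class R [(g, True)] = inv\<^bsub>presented_group R\<^esub> word_class R (gen g)"
  proof (rule inv_equality[symmetric])
    show "word_class R [(g, True)] \<otimes>\<^bsub>presented_group R\<^esub> word_class R (gen g) = \<one>\<^bsub>presented_group R\<^esub>"
      unfolding mult_PG one_PG gen_def using wc_eq[OF pres_rel.cancel[of "[]" g True "[]" R]] by simp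
  qed (auto simp: carrier_PG)
  have 2: "word_class R ((g, e) # w) = word_class R [(g, e)] \<otimes>\<^bsub>presented_group R\<^esub> word_class R w"
    by (simp add: mult_PG)
  show ?case unfolding a ev_Cons 2 Cons using 1 by (cases e) (auto simp: gen_def)
qed

definition lift :: "('h, 'm) monoid_scheme \<Rightarrow> ('g \<Rightarrow> 'h) \<Rightarrow> 'g word set \<Rightarrow> 'h" where
  "lift H f S = ev H f (SOME w. w \<in> S)"

lemma lift_wc:
  assumes "group H" "range f \<subseteq> carrier H" "\<And>r. r \<in> R \<Longrightarrow> ev H f r = \<one>\<^bsub>H\<^esub>"
  shows "lift H f (word_class R w) = ev H f w"
proof -
  have "(SOME v. v \<in> word_class R w) \<in> word_class R w" using wc_mem by (rule someI)
  then have "(w, SOME v. v \<in> word_class R w) \<in> pres_rel R" by (simp add: wc_mem_iff)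
  then show ?thesis unfolding lift_def using group.ev_resp[OF assms] pres_rel.sym by metis
qed

lemma lift_hom:
  assumes "group H" "range f \<subseteq> carrier H" "\<And>r. r \<in> R \<Longrightarrow> ev H f r = \<one>\<^bsub>H\<^esub>"
  shows "lift H f \<in> hom (presented_group R) H"
  unfolding hom_def using lift_wc[OF assms] group.ev_closed[OF assms(1,2)] group.ev_append[OF assms(1,2)]
  by (auto simp: carrier_PG mult_PG)


context group
begin

lemma sq_one: "x \<in> carrier G \<Longrightarrow> x [^] (2::nat) = x \<otimes> x"
  by (simp add: numeral_2_eq_2)

lemma pow_mod:
  assumes "a \<in> carrier G" "a [^] (m::nat) = \<one>"
  shows "a [^] (n::nat) = a [^] (n mod m)"
proof -
  have "a [^] n = a [^] (m * (n div m) + n mod m)" by simp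
  also have "\<dots> = (a [^] m) [^] (n div m) \<otimes> a [^] (n mod m)"
    using assms(1) by (simp add: nat_pow_mult nat_pow_pow)
  finally show ?thesis using assms by simp
qed

lemma conj_pow:
  assumes x: "x \<in> carrier G" and y: "y \<in> carrier G" and xx: "x \<otimes> x = \<one>"
  shows "x \<otimes> (y [^] (n::nat) \<otimes> x) = (x \<otimes> (y \<otimes> x)) [^] n"
proof (induction n)
  case 0 then show ?case using xx x by simp
next
  case (Suc n)
  have xxz: "\<And>z. z \<in> carrier G \<Longrightarrow> x \<otimes> (x \<otimes> z) = z" using xx x by (simp add: m_assoc[symmetric])
  have "x \<otimes> (y [^] Suc n \<otimes> x) = (x \<otimes> (y [^] n \<otimes> x)) \<otimes> (x \<otimes> (y \<otimes> x))"
    using x y by (simp add: m_assoc xxz)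
  then show ?case using Suc by simp
qed

lemma rel_iff: "u \<in> carrier G \<Longrightarrow> v \<in> carrier G \<Longrightarrow> u \<otimes> inv v = \<one> \<longleftrightarrow> u = v"
  by (metis inv_closed inv_equality inv_inv r_inv)

lemma comm_iff: "u \<in> carrier G \<Longrightarrow> v \<in> carrier G \<Longrightarrow>
    u \<otimes> (v \<otimes> (inv u \<otimes> inv v)) = \<one> \<longleftrightarrow> u \<otimes> v = v \<otimes> u"
  by (metis inv_closed inv_mult_group m_assoc m_closed rel_iff)

lemma G_facts:
  assumes w: "w \<in> carrier G" and x: "x \<in> carrier G" and xx: "x \<otimes> x = \<one>"
    and rel: "w [^] (2::nat) = x \<otimes> (w [^] (5::nat) \<otimes> x)"
  shows "w [^] (21::nat) = \<one>" "x \<otimes> (w [^] (15::nat) \<otimes> x) = w [^] (6::nat)"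
    "x \<otimes> (w [^] (7::nat) \<otimes> x) = w [^] (7::nat)"
proof -
  define v where "v = x \<otimes> (w \<otimes> x)"
  have v: "v \<in> carrier G" using v_def w x by simp
  have xxz: "\<And>z. z \<in> carrier G \<Longrightarrow> x \<otimes> (x \<otimes> z) = z" using xx x by (simp add: m_assoc[symmetric])
  have v5: "v [^] (5::nat) = w [^] (2::nat)" using rel conj_pow[OF x w xx] v_def by simp
  have "v [^] (2::nat) = x \<otimes> (w [^] (2::nat) \<otimes> x)" using conj_pow[OF x w xx] v_def by simp
  also have "\<dots> = w [^] (5::nat)" unfolding rel using x w xx by (simp add: m_assoc xxz)
  finally have v2: "v [^] (2::nat) = w [^] (5::nat)" .
  have "w [^] (25::nat) = (w [^] (5::nat)) [^] (5::nat)" using w by (simp add: nat_pow_pow)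
  also have "\<dots> = (v [^] (5::nat)) [^] (2::nat)" using v by (simp add: nat_pow_pow flip: v2)
  also have "\<dots> = w [^] (4::nat)" using w by (simp add: v5 nat_pow_pow)
  finally have w25: "w [^] (25::nat) = w [^] (4::nat)" .
  have "w [^] (21::nat) \<otimes> w [^] (4::nat) = w [^] (4::nat)" using w w25 by (simp add: nat_pow_mult)
  then show "w [^] (21::nat) = \<one>" using w by simp
  have "x \<otimes> (w [^] (15::nat) \<otimes> x) = (v [^] (5::nat)) [^] (3::nat)"
    using conj_pow[OF x w xx] v_def v by (simp add: nat_pow_pow)
  then show "x \<otimes> (w [^] (15::nat) \<otimes> x) = w [^] (6::nat)" using w by (simp add: v5 nat_pow_pow)
  have "x \<otimes> (w [^] (7::nat) \<otimes> x) = v [^] (5::nat) \<otimes> v [^] (2::nat)"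
    using conj_pow[OF x w xx] v_def v by (simp add: nat_pow_mult)
  then show "x \<otimes> (w [^] (7::nat) \<otimes> x) = w [^] (7::nat)" using w by (simp add: v5 v2 nat_pow_mult)
qed

lemma D_facts:
  assumes a: "a \<in> carrier G" and b: "b \<in> carrier G" and x: "x \<in> carrier G"
    and xx: "x \<otimes> x = \<one>" and a3: "a [^] (3::nat) = \<one>" and b7: "b [^] (7::nat) = \<one>"
    and xbx: "x \<otimes> (b \<otimes> x) = b [^] (6::nat)" and ab: "a \<otimes> b = b \<otimes> a" and ax: "a \<otimes> x = x \<otimes> a"
  shows "(a \<otimes> b) [^] (2::nat) = x \<otimes> ((a \<otimes> b) [^] (5::nat) \<otimes> x)"
    "(a \<otimes> b) [^] (7::nat) = a" "(a \<otimes> b) [^] (15::nat) = b"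
proof -
  have pd: "\<And>n::nat. (a \<otimes> b) [^] n = a [^] n \<otimes> b [^] n" using pow_mult_distrib[OF ab a b] .
  have am: "\<And>n::nat. a [^] n = a [^] (n mod 3)" using pow_mod[OF a a3] .
  have bm: "\<And>n::nat. b [^] n = b [^] (n mod 7)" using pow_mod[OF b b7] .
  have anx: "\<And>n::nat. x \<otimes> a [^] n = a [^] n \<otimes> x"
  proof -
    fix n :: nat show "x \<otimes> a [^] n = a [^] n \<otimes> x"
    proof (induction n)
      case (Suc n)
      have "x \<otimes> a [^] Suc n = (x \<otimes> a [^] n) \<otimes> a" using a x by (simp add: m_assoc)
      also have "\<dots> = a [^] n \<otimes> (a \<otimes> x)" using a x by (simp add: Suc m_assoc ax)
      finally show ?case using a x by (simp add: m_assoc)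
    qed (use x in simp)
  qed
  have "x \<otimes> ((a \<otimes> b) [^] (5::nat) \<otimes> x) = a [^] (5::nat) \<otimes> (x \<otimes> (b [^] (5::nat) \<otimes> x))"
    using a b x by (simp add: pd m_assoc[symmetric] anx)
  also have "x \<otimes> (b [^] (5::nat) \<otimes> x) = b [^] (30::nat)"
    using conj_pow[OF x b xx, of 5] b by (simp add: xbx nat_pow_pow)
  finally show "(a \<otimes> b) [^] (2::nat) = x \<otimes> ((a \<otimes> b) [^] (5::nat) \<otimes> x)"
    by (simp add: pd am[of 5] bm[of 30])
  show "(a \<otimes> b) [^] (7::nat) = a" using a b by (simp add: pd am[of 7] bm[of 7])
  show "(a \<otimes> b) [^] (15::nat) = b" using a b by (simp add: pd am[of 15] bm[of 15])
qed

end


lemma PG_rel: "r \<in> R \<Longrightarrow> ev (presented_group R) (\<lambda>g. word_class R (gen g)) r = \<one>\<^bsub>presented_group R\<^esub>"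
  using ev_PG[of R r] wc_rel[of r R] one_PG[of R] by simp

lemma range_PG: "range (\<lambda>g. word_class R (gen g)) \<subseteq> carrier (presented_group R)"
  by (auto simp: carrier_PG)

lemma memD:
  "pow_word (gen X) 2 \<in> relD" "pow_word (gen A) 3 \<in> relD" "pow_word (gen B) 7 \<in> relD"
  "rel_word (gen X @ gen B @ gen X) (pow_word (gen B) 6) \<in> relD"
  "comm_word (gen A) (gen B) \<in> relD" "comm_word (gen A) (gen X) \<in> relD"
  by (simp_all add: relD_def)

lemma memG:
  "pow_word (gen Xi) 2 \<in> relG"
  "rel_word (pow_word (gen Om) 2) (gen Xi @ pow_word (gen Om) 5 @ gen Xi) \<in> relG"
  by (simp_all add: relG_def)

theorem lemma3p2:
  shows "\<exists>\<phi>. \<phi> \<in> iso G_grp D_grp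
            \<and> \<phi> (word_class relG (gen Xi)) = word_class relD (gen X)
            \<and> \<phi> (word_class relG (gen Om))
                = word_class relD (gen A) \<otimes>\<^bsub>D_grp\<^esub> word_class relD (gen B)"
proof -
  interpret Gg: group G_grp by (rule group_PG)
  interpret Dg: group D_grp by (rule group_PG)
  define gD where "gD = (\<lambda>g. word_class relD (gen g))"
  define gG where "gG = (\<lambda>g. word_class relG (gen g))"
  have rD: "range gD \<subseteq> carrier D_grp" unfolding gD_def by (rule range_PG)
  have rG: "range gG \<subseteq> carrier G_grp" unfolding gG_def by (rule range_PG)
  define a where "a = gD A"
  define b where "b = gD B"
  define x where "x = gD X"
  define w where "w = gG Om"
  define y where "y = gG Xi"
  have a: "a \<in> carrier D_grp" and b: "b \<in> carrier D_grp" and x: "x \<in> carrier D_grp"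
    using rD a_def b_def x_def by auto
  have w: "w \<in> carrier G_grp" and y: "y \<in> carrier G_grp" using rG w_def y_def by auto
  have evD: "\<And>r. r \<in> relD \<Longrightarrow> ev D_grp gD r = \<one>\<^bsub>D_grp\<^esub>" unfolding gD_def by (rule PG_rel)
  have evG: "\<And>r. r \<in> relG \<Longrightarrow> ev G_grp gG r = \<one>\<^bsub>G_grp\<^esub>" unfolding gG_def by (rule PG_rel)
  note Dsimps = Dg.ev_append[OF rD] Dg.ev_gen[OF rD] Dg.ev_pow[OF rD] Dg.ev_inv_word[OF rD]
    Dg.ev_closed[OF rD] rel_word_def comm_word_def
  note Gsimps = Gg.ev_append[OF rG] Gg.ev_gen[OF rG] Gg.ev_pow[OF rG] Gg.ev_inv_word[OF rG]
    Gg.ev_closed[OF rG] rel_word_def comm_word_def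
  have xx: "x \<otimes>\<^bsub>D_grp\<^esub> x = \<one>\<^bsub>D_grp\<^esub>"
    using evD[OF memD(1)] x by (simp add: Dsimps Dg.sq_one x_def)
  have a3: "a [^]\<^bsub>D_grp\<^esub> (3::nat) = \<one>\<^bsub>D_grp\<^esub>"
    using evD[OF memD(2)] by (simp add: Dsimps a_def)
  have b7: "b [^]\<^bsub>D_grp\<^esub> (7::nat) = \<one>\<^bsub>D_grp\<^esub>"
    using evD[OF memD(3)] by (simp add: Dsimps b_def)
  have xbx: "x \<otimes>\<^bsub>D_grp\<^esub> (b \<otimes>\<^bsub>D_grp\<^esub> x) = b [^]\<^bsub>D_grp\<^esub> (6::nat)"
    using evD[OF memD(4)] a b x
    unfolding rel_word_def Dg.ev_append[OF rD]
    by (simp add: Dg.ev_gen[OF rD] Dg.ev_pow[OF rD] Dg.ev_inv_word[OF rD] Dg.rel_iff b_def x_def)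
  have ab: "a \<otimes>\<^bsub>D_grp\<^esub> b = b \<otimes>\<^bsub>D_grp\<^esub> a"
    using evD[OF memD(5)] a b
    unfolding comm_word_def Dg.ev_append[OF rD]
    by (simp add: Dg.ev_gen[OF rD] Dg.ev_inv_word[OF rD] Dg.comm_iff a_def b_def)
  have ax: "a \<otimes>\<^bsub>D_grp\<^esub> x = x \<otimes>\<^bsub>D_grp\<^esub> a"
    using evD[OF memD(6)] a x
    unfolding comm_word_def Dg.ev_append[OF rD]
    by (simp add: Dg.ev_gen[OF rD] Dg.ev_inv_word[OF rD] Dg.comm_iff a_def x_def)
  have yy: "y \<otimes>\<^bsub>G_grp\<^esub> y = \<one>\<^bsub>G_grp\<^esub>"
    using evG[OF memG(1)] y by (simp add: Gsimps Gg.sq_one y_def)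
  have wrel: "w [^]\<^bsub>G_grp\<^esub> (2::nat) = y \<otimes>\<^bsub>G_grp\<^esub> (w [^]\<^bsub>G_grp\<^esub> (5::nat) \<otimes>\<^bsub>G_grp\<^esub> y)"
    using evG[OF memG(2)] w y
    unfolding rel_word_def Gg.ev_append[OF rG]
    by (simp add: Gg.ev_append[OF rG] Gg.ev_gen[OF rG] Gg.ev_pow[OF rG] Gg.ev_inv_word[OF rG] Gg.rel_iff w_def y_def)
  note GF = Gg.G_facts[OF w y yy wrel]
  note DF = Dg.D_facts[OF a b x xx a3 b7 xbx ab ax]
  define fP where "fP = (\<lambda>g. case g of Om \<Rightarrow> a \<otimes>\<^bsub>D_grp\<^esub> b | Xi \<Rightarrow> x)"
  define fQ where "fQ = (\<lambda>g. case g of A \<Rightarrow> w [^]\<^bsub>G_grp\<^esub> (7::nat) | B \<Rightarrow> w [^]\<^bsub>G_grp\<^esub> (15::nat) | X \<Rightarrow> y)"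
  have rP: "range fP \<subseteq> carrier D_grp" using a b x by (auto simp: fP_def split: genG.split)
  have rQ: "range fQ \<subseteq> carrier G_grp" using w y by (auto simp: fQ_def split: genD.split)
  have fP_simps: "fP Om = a \<otimes>\<^bsub>D_grp\<^esub> b" "fP Xi = x" by (simp_all add: fP_def)
  have fQ_simps: "fQ A = w [^]\<^bsub>G_grp\<^esub> (7::nat)" "fQ B = w [^]\<^bsub>G_grp\<^esub> (15::nat)" "fQ X = y"
    by (simp_all add: fQ_def)
  have relP: "\<And>r. r \<in> relG \<Longrightarrow> ev D_grp fP r = \<one>\<^bsub>D_grp\<^esub>"
  proof -
    fix r assume "r \<in> relG"
    then consider "r = pow_word (gen Xi) 2"
      | "r = rel_word (pow_word (gen Om) 2) (gen Xi @ pow_word (gen Om) 5 @ gen Xi)"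
      unfolding relG_def by blast
    then show "ev D_grp fP r = \<one>\<^bsub>D_grp\<^esub>"
    proof cases
      case 1 then show ?thesis using x xx
        by (simp add: Dg.ev_pow[OF rP] Dg.ev_gen[OF rP] fP_simps Dg.sq_one)
    next
      case 2 then show ?thesis using a b x DF(1) unfolding rel_word_def
        by (simp add: Dg.ev_append[OF rP] Dg.ev_pow[OF rP] Dg.ev_gen[OF rP] Dg.ev_inv_word[OF rP]
            Dg.ev_closed[OF rP] Dg.rel_iff fP_simps)
    qed
  qed
  have w21: "w [^]\<^bsub>G_grp\<^esub> (21::nat) = \<one>\<^bsub>G_grp\<^esub>" by (rule GF(1))
  have wm: "\<And>n::nat. w [^]\<^bsub>G_grp\<^esub> n = w [^]\<^bsub>G_grp\<^esub> (n mod 21)" using Gg.pow_mod[OF w w21] .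
  have yw7: "w [^]\<^bsub>G_grp\<^esub> (7::nat) \<otimes>\<^bsub>G_grp\<^esub> y = y \<otimes>\<^bsub>G_grp\<^esub> w [^]\<^bsub>G_grp\<^esub> (7::nat)"
  proof -
    have "w [^]\<^bsub>G_grp\<^esub> (7::nat) \<otimes>\<^bsub>G_grp\<^esub> y
        = (y \<otimes>\<^bsub>G_grp\<^esub> (w [^]\<^bsub>G_grp\<^esub> (7::nat) \<otimes>\<^bsub>G_grp\<^esub> y)) \<otimes>\<^bsub>G_grp\<^esub> y"
      using GF(3) by simp
    also have "\<dots> = y \<otimes>\<^bsub>G_grp\<^esub> w [^]\<^bsub>G_grp\<^esub> (7::nat) \<otimes>\<^bsub>G_grp\<^esub> (y \<otimes>\<^bsub>G_grp\<^esub> y)"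
      using w y by (simp add: Gg.m_assoc)
    finally show ?thesis using w y yy by simp
  qed
  have relQ: "\<And>r. r \<in> relD \<Longrightarrow> ev G_grp fQ r = \<one>\<^bsub>G_grp\<^esub>"
  proof -
    fix r assume "r \<in> relD"
    then consider "r = pow_word (gen X) 2" | "r = pow_word (gen A) 3" | "r = pow_word (gen B) 7"
      | "r = rel_word (gen X @ gen B @ gen X) (pow_word (gen B) 6)"
      | "r = comm_word (gen A) (gen B)" | "r = comm_word (gen A) (gen X)"
      unfolding relD_def by blast
    then show "ev G_grp fQ r = \<one>\<^bsub>G_grp\<^esub>"
    proof cases
      case 1 then show ?thesis using y yy
        by (simp add: Gg.ev_pow[OF rQ] Gg.ev_gen[OF rQ] fQ_simps Gg.sq_one)
    next
      case 2 then show ?thesis using w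
        by (simp add: Gg.ev_pow[OF rQ] Gg.ev_gen[OF rQ] fQ_simps Gg.nat_pow_pow w21)
    next
      case 3 then show ?thesis using w
        by (simp add: Gg.ev_pow[OF rQ] Gg.ev_gen[OF rQ] fQ_simps Gg.nat_pow_pow wm[of 105])
    next
      case 4
      have e: "ev G_grp fQ r = y \<otimes>\<^bsub>G_grp\<^esub> (w [^]\<^bsub>G_grp\<^esub> (15::nat) \<otimes>\<^bsub>G_grp\<^esub> (y \<otimes>\<^bsub>G_grp\<^esub> inv\<^bsub>G_grp\<^esub> (w [^]\<^bsub>G_grp\<^esub> (6::nat))))"
        using 4 w unfolding rel_word_def
        by (simp add: Gg.ev_append[OF rQ] Gg.ev_pow[OF rQ] Gg.ev_gen[OF rQ] Gg.ev_inv_word[OF rQ]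
            fQ_simps Gg.nat_pow_pow wm[of 90])
      also have "\<dots> = (y \<otimes>\<^bsub>G_grp\<^esub> (w [^]\<^bsub>G_grp\<^esub> (15::nat) \<otimes>\<^bsub>G_grp\<^esub> y)) \<otimes>\<^bsub>G_grp\<^esub> inv\<^bsub>G_grp\<^esub> (w [^]\<^bsub>G_grp\<^esub> (6::nat))"
        using w y by (simp add: Gg.m_assoc)
      finally show ?thesis using GF(2) w by simp
    next
      case 5 then show ?thesis using w unfolding comm_word_def
        by (simp add: Gg.ev_append[OF rQ] Gg.ev_gen[OF rQ] Gg.ev_inv_word[OF rQ]
            Gg.comm_iff fQ_simps Gg.nat_pow_comm)
    next
      case 6 then show ?thesis using w y yw7 unfolding comm_word_def
        by (simp add: Gg.ev_append[OF rQ] Gg.ev_gen[OF rQ] Gg.ev_inv_word[OF rQ]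
            Gg.comm_iff fQ_simps)
    qed
  qed
  define P where "P = lift D_grp fP"
  define Q where "Q = lift G_grp fQ"
  have hP: "P \<in> hom G_grp D_grp" unfolding P_def by (rule lift_hom[OF group_PG rP relP])
  have hQ: "Q \<in> hom D_grp G_grp" unfolding Q_def by (rule lift_hom[OF group_PG rQ relQ])
  have Pwc: "\<And>v. P (word_class relG v) = ev D_grp fP v" unfolding P_def by (rule lift_wc[OF group_PG rP relP])
  have Qwc: "\<And>v. Q (word_class relD v) = ev G_grp fQ v" unfolding Q_def by (rule lift_wc[OF group_PG rQ relQ])
  have QfP: "Q \<circ> fP = gG"
  proof
    fix g show "(Q \<circ> fP) g = gG g"
    proof (cases g)
      case Om
      have "Q (a \<otimes>\<^bsub>D_grp\<^esub> b) = Q a \<otimes>\<^bsub>G_grp\<^esub> Q b" using hom_mult[OF hQ a b] .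
      also have "\<dots> = w [^]\<^bsub>G_grp\<^esub> (7::nat) \<otimes>\<^bsub>G_grp\<^esub> w [^]\<^bsub>G_grp\<^esub> (15::nat)"
        unfolding a_def b_def gD_def Qwc by (simp add: Gg.ev_gen[OF rQ] fQ_simps)
      also have "\<dots> = w" using w by (simp add: Gg.nat_pow_mult wm[of 22])
      finally show ?thesis using Om by (simp add: fP_simps w_def)
    next
      case Xi then show ?thesis by (simp add: fP_simps x_def gD_def Qwc Gg.ev_gen[OF rQ] fQ_simps y_def)
    qed
  qed
  have PfQ: "P \<circ> fQ = gD"
  proof
    fix g
    have Pw: "P w = a \<otimes>\<^bsub>D_grp\<^esub> b" unfolding w_def gG_def Pwc by (simp add: Dg.ev_gen[OF rP] fP_simps)
    show "(P \<circ> fQ) g = gD g"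
    proof (cases g)
      case A then show ?thesis using hom_nat_pow[OF hP w group_PG group_PG, of 7] Pw DF(2)
        by (simp add: fQ_simps a_def)
    next
      case B then show ?thesis using hom_nat_pow[OF hP w group_PG group_PG, of 15] Pw DF(3)
        by (simp add: fQ_simps b_def)
    next
      case X then show ?thesis by (simp add: fQ_simps y_def gG_def Pwc Dg.ev_gen[OF rP] fP_simps x_def)
    qed
  qed
  have QP: "\<forall>u \<in> carrier G_grp. Q (P u) = u"
  proof
    fix u assume "u \<in> carrier G_grp"
    then obtain v where u: "u = word_class relG v" by (auto simp: carrier_PG)
    have "Q (P u) = ev G_grp (Q \<circ> fP) v" unfolding u Pwc by (rule Dg.ev_hom[OF hQ group_PG rP])
    also have "\<dots> = u" unfolding QfP gG_def u by (rule ev_PG)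
    finally show "Q (P u) = u" .
  qed
  have PQ: "\<forall>u \<in> carrier D_grp. P (Q u) = u"
  proof
    fix u assume "u \<in> carrier D_grp"
    then obtain v where u: "u = word_class relD v" by (auto simp: carrier_PG)
    have "P (Q u) = ev D_grp (P \<circ> fQ) v" unfolding u Qwc by (rule Gg.ev_hom[OF hP group_PG rQ])
    also have "\<dots> = u" unfolding PfQ gD_def u by (rule ev_PG)
    finally show "P (Q u) = u" .
  qed
  have "bij_betw P (carrier G_grp) (carrier D_grp)"
    by (rule bij_betw_byWitness[OF QP PQ]) (use hP hQ in \<open>auto simp: hom_def\<close>)
  then have "P \<in> iso G_grp D_grp" using hP by (simp add: iso_def)
  moreover have "P (word_class relG (gen Xi)) = word_class relD (gen X)"
    by (simp add: Pwc Dg.ev_gen[OF rP] fP_simps x_def gD_def)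
  moreover have "P (word_class relG (gen Om)) = word_class relD (gen A) \<otimes>\<^bsub>D_grp\<^esub> word_class relD (gen B)"
    by (simp add: Pwc Dg.ev_gen[OF rP] fP_simps a_def b_def gD_def)
  ultimately show ?thesis by blast
qed

end
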